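(* Let $Z\in\mathbb{R}^{n\times m}$ and $w\in\mathbb{R}^n$ be fixed, let $\theta^*\in\mathbb{R}^m$ with $S^*=\operatorname{supp}(\theta^* )$, and set $y=Z\theta^*+w$. Let $\rho_\lambda$ satisfy Condition (R) and assume that for some $\delta\in(0,1)$, $$\frac1n|\langle w,Zu\rangle|\le\delta\Big[\frac{1}{2n}\|Zu\|_2^2+\rho_\lambda(u)\Big]\quad\text{for all }u\in\mathbb{R}^m.$$ Let $\xi=(1+\delta)/(1-\delta)$ and assume $\gamma^2:=\gamma^2_\rho(Z,S^*;\xi)>0$. Then every $\hat\theta\in\arg\min_{\theta\in\mathbb{R}^m}\frac{1}{2n}\|y-Z\theta\|_2^2+\rho_\lambda(\theta)$ satisfies $$\|\hat\theta-\theta^*\|_2\le\frac{2\xi}{\gamma^2}\rho_\lambda'(0^+)\|\theta^*\|_0^{1/2},\qquad\|\hat\theta-\theta^*\|_1\le\frac{2\xi(1+\xi)}{\gamma^2}\rho_\lambda'(0^+)\|\theta^*\|_0.$$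
   Context: $\rho_\lambda(u)=\sum_i\rho_\lambda(|u_i|)$ for vectors. Condition (R): $\rho_\lambda:[0,\infty)\to[0,\infty)$ is concave, nondecreasing, right-differentiable at $0$, $\rho_\lambda(0)=0$, $0<\rho_\lambda'(0^+)<\infty$ (right derivative at $0$), and there are constants $a,b\ge0$ independent of $\lambda$ with $\rho_\lambda(x)\ge\min\{a\lambda x,b\lambda^2\}$. For $A\subset[m]$ and $u\in\mathbb{R}^m$, $u_A$ denotes $u$ restricted to the coordinates in $A$. Cone: $\mathcal{C}_\rho(A,\xi)=\{u\in\mathbb{R}^m:\rho_\lambda(u_{A^c})\le\xi\rho_\lambda(u_A)\}$. Generalized restricted eigenvalue constant: $\gamma^2_\rho(Z,A;\xi)=\inf\{\|Zu\|_2^2/(n\|u\|_2^2):u\in\mathcal{C}_\rho(A,\xi),u\neq0\}$. *)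

theory Defs
  imports "HOL-Analysis.Analysis"
begin

text \<open>A penalty family: rho lam x is rho_lambda(x) for x \<ge> 0.\<close>

definition rho_deriv0 :: "(real \<Rightarrow> real \<Rightarrow> real) \<Rightarrow> real \<Rightarrow> real" where
  "rho_deriv0 rho lam = (THE D. (rho lam has_real_derivative D) (at 0 within {0..}))"

definition cond_R :: "(real \<Rightarrow> real \<Rightarrow> real) \<Rightarrow> bool" where
  "cond_R rho \<longleftrightarrow>
     (\<exists>a b. a \<ge> 0 \<and> b \<ge> 0 \<and>
       (\<forall>lam > 0.
          (\<forall>x \<ge> 0. rho lam x \<ge> 0) \<and>
          concave_on {0..} (rho lam) \<and>
          mono_on {0..} (rho lam) \<and>
          rho lam 0 = 0 \<and>
          (\<exists>D. (rho lam has_real_derivative D) (at 0 within {0..})) \<and>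
          0 < rho_deriv0 rho lam \<and>
          (\<forall>x \<ge> 0. rho lam x \<ge> min (a * lam * x) (b * lam\<^sup>2))))"

definition rho_on :: "(real \<Rightarrow> real \<Rightarrow> real) \<Rightarrow> real \<Rightarrow> 'm::finite set \<Rightarrow> real^'m \<Rightarrow> real" where
  "rho_on rho lam A u = (\<Sum>i\<in>A. rho lam \<bar>u $ i\<bar>)"

definition rho_vec :: "(real \<Rightarrow> real \<Rightarrow> real) \<Rightarrow> real \<Rightarrow> real^'m::finite \<Rightarrow> real" where
  "rho_vec rho lam u = rho_on rho lam UNIV u"

definition rho_cone :: "(real \<Rightarrow> real \<Rightarrow> real) \<Rightarrow> real \<Rightarrow> 'm::finite set \<Rightarrow> real \<Rightarrow> (real^'m) set" where
  "rho_cone rho lam A xi = {u. rho_on rho lam (- A) u \<le> xi * rho_on rho lam A u}"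

text \<open>Generalized restricted eigenvalue constant, as an extended real (inf of empty set = +\<infinity>).\<close>
definition gamma2 :: "(real \<Rightarrow> real \<Rightarrow> real) \<Rightarrow> real \<Rightarrow> real^'m^'n \<Rightarrow> 'm::finite set \<Rightarrow> real \<Rightarrow> ereal" where
  "gamma2 rho lam Z A xi =
     Inf {ereal ((norm (Z *v u))\<^sup>2 / (real CARD('n::finite) * (norm u)\<^sup>2)) | u. u \<in> rho_cone rho lam A xi \<and> u \<noteq> 0}"

definition supp :: "real^'m::finite \<Rightarrow> 'm set" where
  "supp v = {i. v $ i \<noteq> 0}"

definition l0norm :: "real^'m::finite \<Rightarrow> nat" where
  "l0norm v = card (supp v)"

definition l1norm :: "real^'m::finite \<Rightarrow> real" where
  "l1norm v = (\<Sum>i\<in>UNIV. \<bar>v $ i\<bar>)"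

definition pen_obj :: "(real \<Rightarrow> real \<Rightarrow> real) \<Rightarrow> real \<Rightarrow> real^'m^'n \<Rightarrow> real^'n \<Rightarrow> real^'m \<Rightarrow> real" where
  "pen_obj rho lam Z y \<theta> =
     1 / (2 * real CARD('n::finite)) * (norm (y - Z *v \<theta>))\<^sup>2 + rho_vec rho lam (\<theta>::real^'m::finite)"

end

theory Submission
  imports Defs
begin

lemma conc_scale:
  fixes f :: "real \<Rightarrow> real"
  assumes conc: "concave_on {0..} f" and f0: "f 0 = (0::real)"
    and t: "0 \<le> t" "t \<le> 1" and x: "0 \<le> x"
  shows "t * f x \<le> f (t * x)"
  using concave_onD[OF conc t, of 0 x] x f0 by simp

lemma conc_subadd:
  fixes f :: "real \<Rightarrow> real"
  assumes conc: "concave_on {0..} f" and f0: "f 0 = (0::real)"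
    and x: "0 \<le> x" and y: "0 \<le> y"
  shows "f (x + y) \<le> f x + f y"
proof (cases "x + y = 0")
  case True then have "x = 0" "y = 0" using x y by linarith+
  then show ?thesis using f0 by simp
next
  case False
  then have s: "x + y > 0" using x y by simp
  have 1: "x/(x+y) * f (x+y) \<le> f x"
    using conc_scale[OF conc f0, of "x/(x+y)" "x+y"] s x y by simp
  have 2: "y/(x+y) * f (x+y) \<le> f y"
    using conc_scale[OF conc f0, of "y/(x+y)" "x+y"] s x y by simp
  have "f (x+y) = x/(x+y) * f (x+y) + y/(x+y) * f (x+y)"
    using s by (simp add: add_divide_distrib[symmetric] distrib_right[symmetric])
  then show ?thesis using 1 2 by linarith
qed

lemma conc_ratio:
  fixes f :: "real \<Rightarrow> real"
  assumes conc: "concave_on {0..} f" and f0: "f 0 = (0::real)"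
    and x: "0 \<le> x" "x \<le> T"
  shows "x * f T \<le> T * f x"
proof (cases "T = 0")
  case True then show ?thesis using x by simp
next
  case False
  then have T: "T > 0" using x by simp
  have "x/T * f T \<le> f (x/T * T)"
    using conc_scale[OF conc f0, of "x/T" T] T x by simp
  then show ?thesis using T by (simp add: field_simps)
qed

lemma conc_linear_bound:
  fixes f :: "real \<Rightarrow> real"
  assumes conc: "concave_on {0..} f" and f0: "f 0 = (0::real)"
    and D: "(f has_real_derivative D) (at 0 within {0..})" and x: "0 \<le> x"
  shows "f x \<le> D * x"
proof (cases "x = 0")
  case True then show ?thesis using f0 by simp
next
  case False
  then have x: "x > 0" using x by simp
  have lim: "((\<lambda>h. (f h - f 0) / (h - 0)) \<longlongrightarrow> D) (at 0 within {0..})"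
    using D by (simp add: has_field_derivative_iff)
  have nb: "at (0::real) within {0..} \<noteq> bot"
  proof -
    have "{0::real..} - {0} = {0<..}" by auto
    then show ?thesis by (simp add: at_within_eq_bot_iff)
  qed
  have ev: "eventually (\<lambda>h. f x / x \<le> (f h - f 0) / (h - 0)) (at 0 within {0..})"
  proof -
    have "eventually (\<lambda>h. h \<in> {0..} \<and> h \<noteq> 0 \<and> dist h 0 < x) (at (0::real) within {0..})"
      unfolding eventually_at by (rule exI[of _ x]) (use x in auto)
    then show ?thesis
    proof (rule eventually_mono)
      fix h :: real assume h: "h \<in> {0..} \<and> h \<noteq> 0 \<and> dist h 0 < x"
      then have h0: "0 < h" "h \<le> x" by auto
      have "h * f x \<le> x * f h" using conc_ratio[OF conc f0, of h x] h0 by simp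
      then show "f x / x \<le> (f h - f 0) / (h - 0)" using h0 x f0
        by (simp add: field_simps)
    qed
  qed
  have "f x / x \<le> D" by (rule tendsto_lowerbound[OF lim ev nb])
  then show ?thesis using x by (simp add: field_simps)
qed

lemma conc_pos:
  fixes f :: "real \<Rightarrow> real"
  assumes mono: "mono_on {0..} f" and f0: "f 0 = 0"
    and D: "(f has_real_derivative D) (at 0 within {0..})" and Dpos: "D > 0" and x: "0 < x"
  shows "f x > 0"
proof (rule ccontr)
  assume "\<not> f x > 0"
  moreover have "f x \<ge> 0" using mono_onD[OF mono, of 0 x] x f0 by simp
  ultimately have fx: "f x = 0" by simp
  have lim: "((\<lambda>h. (f h - f 0) / (h - 0)) \<longlongrightarrow> D) (at 0 within {0..})"
    using D by (simp add: has_field_derivative_iff)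
  have nb: "at (0::real) within {0..} \<noteq> bot"
  proof -
    have "{0::real..} - {0} = {0<..}" by auto
    then show ?thesis by (simp add: at_within_eq_bot_iff)
  qed
  have ev: "eventually (\<lambda>h. (f h - f 0) / (h - 0) \<le> 0) (at 0 within {0..})"
  proof -
    have "eventually (\<lambda>h. h \<in> {0..} \<and> h \<noteq> 0 \<and> dist h 0 < x) (at (0::real) within {0..})"
      unfolding eventually_at by (rule exI[of _ x]) (use x in auto)
    then show ?thesis
    proof (rule eventually_mono)
      fix h :: real assume h: "h \<in> {0..} \<and> h \<noteq> 0 \<and> dist h 0 < x"
      then have h0: "0 < h" "h \<le> x" by auto
      have "f h \<le> f x" using mono_onD[OF mono, of h x] h0 by simp
      then show "(f h - f 0) / (h - 0) \<le> 0" using h0 fx f0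
        by (simp add: divide_nonpos_pos)
    qed
  qed
  have "D \<le> 0" by (rule tendsto_upperbound[OF lim ev nb])
  then show False using Dpos by simp
qed

lemma coord_bound:
  fixes f :: "real \<Rightarrow> real"
  assumes conc: "concave_on {0..} f" and mono: "mono_on {0..} f" and f0: "f 0 = 0"
    and T: "T > 0" and fT: "f T > 0" and x: "0 \<le> x"
  shows "x \<le> T * f x / f T + x\<^sup>2 / (2 * T)"
proof (cases "x \<le> T")
  case True
  have "x * f T \<le> T * f x" using conc_ratio[OF conc f0 x True] .
  then have "x \<le> T * f x / f T" using fT by (simp add: field_simps)
  moreover have "x\<^sup>2 / (2 * T) \<ge> 0" using T by simp
  ultimately show ?thesis by linarith
next
  case False
  have "f T \<le> f x" using mono_onD[OF mono, of T x] T False by simp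
  then have 1: "T * f x / f T \<ge> T" using fT T by (simp add: field_simps)
  have "(x - T)\<^sup>2 \<ge> 0" by simp
  then have "x \<le> T/2 + x\<^sup>2 / (2*T)" using T by (simp add: field_simps power2_eq_square)
  moreover have "T/2 \<le> T" using T by simp
  ultimately show ?thesis using 1 by linarith
qed

lemma conc_jensen:
  fixes f :: "real \<Rightarrow> real" and x :: "'a \<Rightarrow> real"
  assumes conc: "concave_on {0..} f" and fin: "finite S" and ne: "S \<noteq> {}"
    and x: "\<And>i. i \<in> S \<Longrightarrow> 0 \<le> x i"
  shows "(\<Sum>i\<in>S. f (x i)) \<le> real (card S) * f ((\<Sum>i\<in>S. x i) / real (card S))"
proof -
  have c: "real (card S) > 0" using fin ne by (simp add: card_gt_0_iff)
  have cv: "convex_on {0..} (\<lambda>t. - f t)" using conc by (simp add: concave_on_def)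
  have "(\<lambda>t. - f t) (\<Sum>i\<in>S. (1 / real (card S)) *\<^sub>R x i) \<le> (\<Sum>i\<in>S. (1 / real (card S)) * (\<lambda>t. - f t) (x i))"
    by (rule convex_on_sum[OF fin ne cv]) (use c x in auto)
  then have "- f ((\<Sum>i\<in>S. x i) / real (card S)) \<le> - (\<Sum>i\<in>S. f (x i)) / real (card S)"
    by (simp add: sum_divide_distrib[symmetric] sum_negf)
  then show ?thesis using c by (simp add: field_simps)
qed

lemma l1_le_sqrt:
  fixes g :: "'a \<Rightarrow> real"
  shows "(\<Sum>i\<in>S. \<bar>g i\<bar>) \<le> sqrt (real (card S)) * sqrt (\<Sum>i\<in>S. (g i)\<^sup>2)"
proof -
  have "(\<Sum>i\<in>S. \<bar>g i\<bar>)\<^sup>2 \<le> (\<Sum>i\<in>S. \<bar>g i\<bar>\<^sup>2) * card S"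
    by (rule sum_squared_le_sum_of_squares)
  then have "(\<Sum>i\<in>S. \<bar>g i\<bar>)\<^sup>2 \<le> real (card S) * (\<Sum>i\<in>S. (g i)\<^sup>2)"
    by (simp add: mult.commute)
  then have "sqrt ((\<Sum>i\<in>S. \<bar>g i\<bar>)\<^sup>2) \<le> sqrt (real (card S) * (\<Sum>i\<in>S. (g i)\<^sup>2))"
    using real_sqrt_le_mono by blast
  moreover have "(\<Sum>i\<in>S. \<bar>g i\<bar>) \<ge> 0" by (simp add: sum_nonneg)
  ultimately show ?thesis by (simp add: real_sqrt_mult)
qed

lemma sum_split_UNIV:
  fixes g :: "'a::finite \<Rightarrow> real"
  shows "sum g UNIV = sum g S + sum g (- S)"
proof -
  have "sum g UNIV = sum g (S \<union> - S)" by simp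
  also have "\<dots> = sum g S + sum g (- S)" by (rule sum.union_disjoint) auto
  finally show ?thesis .
qed

lemma norm_sq_vec: "(norm (u :: real^'m::finite))\<^sup>2 = (\<Sum>i\<in>UNIV. (u $ i)\<^sup>2)"
  unfolding power2_norm_eq_inner inner_vec_def by (simp add: power2_eq_square)

theorem theorem8:
  fixes Z :: "real^'m::finite^'n::finite" and w :: "real^'n" and \<theta>star \<theta>hat :: "real^'m"
    and rho :: "real \<Rightarrow> real \<Rightarrow> real" and lam \<delta> :: real
  assumes R: "cond_R rho" and lam: "lam > 0"
    and \<delta>: "0 < \<delta>" "\<delta> < 1"
    and noise: "\<forall>u :: real^'m. 1 / real CARD('n) * \<bar>w \<bullet> (Z *v u)\<bar>
                  \<le> \<delta> * (1 / (2 * real CARD('n)) * (norm (Z *v u))\<^sup>2 + rho_vec rho lam u)"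
    and gam: "gamma2 rho lam Z (supp \<theta>star) ((1 + \<delta>) / (1 - \<delta>)) > 0"
    and argmin: "\<forall>\<theta>. pen_obj rho lam Z (Z *v \<theta>star + w) \<theta>hat \<le> pen_obj rho lam Z (Z *v \<theta>star + w) \<theta>"
  shows "(ereal (norm (\<theta>hat - \<theta>star))
           \<le> ereal (2 * ((1 + \<delta>) / (1 - \<delta>)) * rho_deriv0 rho lam * sqrt (real (l0norm \<theta>star)))
             / gamma2 rho lam Z (supp \<theta>star) ((1 + \<delta>) / (1 - \<delta>))) \<and>
         (ereal (l1norm (\<theta>hat - \<theta>star))
           \<le> ereal (2 * ((1 + \<delta>) / (1 - \<delta>)) * (1 + (1 + \<delta>) / (1 - \<delta>)) * rho_deriv0 rho lam * real (l0norm \<theta>star))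
             / gamma2 rho lam Z (supp \<theta>star) ((1 + \<delta>) / (1 - \<delta>)))"
proof -
  define f where "f = rho lam"
  define S where "S = supp \<theta>star"
  define \<xi> where "\<xi> = (1 + \<delta>) / (1 - \<delta>)"
  define D where "D = rho_deriv0 rho lam"
  define G where "G = gamma2 rho lam Z S \<xi>"
  define u where "u = \<theta>hat - \<theta>star"
  define N where "N = real CARD('n)"
  define s where "s = real (l0norm \<theta>star)"
  define r where "r = norm u"
  define Q where "Q = (norm (Z *v u))\<^sup>2"
  define rS where "rS = rho_on rho lam S u"
  define rSc where "rSc = rho_on rho lam (- S) u"
  have N: "N > 0" unfolding N_def by simp
  have \<xi>pos: "\<xi> > 0" unfolding \<xi>_def using \<delta> by simp
  have s_card: "s = real (card S)" unfolding s_def S_def l0norm_def by simp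
  obtain a b where ab: "\<forall>lam > 0.
          (\<forall>x \<ge> 0. rho lam x \<ge> 0) \<and>
          concave_on {0..} (rho lam) \<and>
          mono_on {0..} (rho lam) \<and>
          rho lam 0 = 0 \<and>
          (\<exists>D. (rho lam has_real_derivative D) (at 0 within {0..})) \<and>
          0 < rho_deriv0 rho lam \<and>
          (\<forall>x \<ge> 0. rho lam x \<ge> min (a * lam * x) (b * lam\<^sup>2))"
    using R unfolding cond_R_def by blast
  have fnn: "\<And>x. x \<ge> 0 \<Longrightarrow> f x \<ge> 0" and conc: "concave_on {0..} f"
    and mono: "mono_on {0..} f" and f0: "f 0 = 0"
    and Dpos: "D > 0" and exD: "\<exists>D. (f has_real_derivative D) (at 0 within {0..})"
    using ab lam unfolding f_def D_def by auto
  obtain D' where D': "(f has_real_derivative D') (at 0 within {0..})" using exD by blast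
  have nb: "at (0::real) within {0..} \<noteq> bot"
  proof -
    have "{0::real..} - {0} = {0<..}" by auto
    then show ?thesis by (simp add: at_within_eq_bot_iff)
  qed
  have Dder: "(f has_real_derivative D) (at 0 within {0..})"
  proof -
    have "D = D'"
      unfolding D_def rho_deriv0_def f_def[symmetric]
    proof (rule the_equality)
      show "(f has_real_derivative D') (at 0 within {0..})" by (rule D')
    next
      fix E assume E: "(f has_real_derivative E) (at 0 within {0..})"
      have l1: "((\<lambda>h. (f h - f 0) / (h - 0)) \<longlongrightarrow> E) (at 0 within {0..})"
        using E by (simp add: has_field_derivative_iff)
      have l2: "((\<lambda>h. (f h - f 0) / (h - 0)) \<longlongrightarrow> D') (at 0 within {0..})"
        using D' by (simp add: has_field_derivative_iff)
      show "E = D'" using tendsto_unique[OF nb l1 l2] .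
    qed
    then show ?thesis using D' by simp
  qed
  have flin: "\<And>x. x \<ge> 0 \<Longrightarrow> f x \<le> D * x" using conc_linear_bound[OF conc f0 Dder] .
  have fpos: "\<And>x. x > 0 \<Longrightarrow> f x > 0" using conc_pos[OF mono f0 Dder Dpos] .
  have fsub: "\<And>x y. x \<ge> 0 \<Longrightarrow> y \<ge> 0 \<Longrightarrow> f (x + y) \<le> f x + f y"
    using conc_subadd[OF conc f0] .
  have fmono: "\<And>x y. 0 \<le> x \<Longrightarrow> x \<le> y \<Longrightarrow> f x \<le> f y"
    using mono by (simp add: mono_on_def)

  have rvu: "rho_vec rho lam u = rS + rSc"
    unfolding rho_vec_def rho_on_def rS_def rSc_def by (rule sum_split_UNIV)
  have rvhat: "rho_vec rho lam \<theta>hat = (\<Sum>i\<in>S. f \<bar>\<theta>hat $ i\<bar>) + rSc"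
  proof -
    have "rho_vec rho lam \<theta>hat = (\<Sum>i\<in>S. f \<bar>\<theta>hat $ i\<bar>) + (\<Sum>i\<in>-S. f \<bar>\<theta>hat $ i\<bar>)"
      unfolding rho_vec_def rho_on_def f_def by (rule sum_split_UNIV)
    moreover have "(\<Sum>i\<in>-S. f \<bar>\<theta>hat $ i\<bar>) = rSc"
      unfolding rSc_def rho_on_def f_def
      by (rule sum.cong) (auto simp: u_def S_def supp_def)
    ultimately show ?thesis by simp
  qed
  have rvstar: "rho_vec rho lam \<theta>star \<le> (\<Sum>i\<in>S. f \<bar>\<theta>hat $ i\<bar>) + rS"
  proof -
    have "rho_vec rho lam \<theta>star = (\<Sum>i\<in>S. f \<bar>\<theta>star $ i\<bar>) + (\<Sum>i\<in>-S. f \<bar>\<theta>star $ i\<bar>)"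
      unfolding rho_vec_def rho_on_def f_def by (rule sum_split_UNIV)
    moreover have "(\<Sum>i\<in>-S. f \<bar>\<theta>star $ i\<bar>) = 0"
      by (rule sum.neutral) (auto simp: S_def supp_def f0)
    moreover have "(\<Sum>i\<in>S. f \<bar>\<theta>star $ i\<bar>) \<le> (\<Sum>i\<in>S. f \<bar>\<theta>hat $ i\<bar> + f \<bar>u $ i\<bar>)"
    proof (rule sum_mono)
      fix i
      have "\<bar>\<theta>star $ i\<bar> \<le> \<bar>\<theta>hat $ i\<bar> + \<bar>u $ i\<bar>" unfolding u_def by simp
      then have "f \<bar>\<theta>star $ i\<bar> \<le> f (\<bar>\<theta>hat $ i\<bar> + \<bar>u $ i\<bar>)" by (intro fmono) auto
      also have "\<dots> \<le> f \<bar>\<theta>hat $ i\<bar> + f \<bar>u $ i\<bar>" by (intro fsub) auto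
      finally show "f \<bar>\<theta>star $ i\<bar> \<le> f \<bar>\<theta>hat $ i\<bar> + f \<bar>u $ i\<bar>" .
    qed
    moreover have "(\<Sum>i\<in>S. f \<bar>\<theta>hat $ i\<bar> + f \<bar>u $ i\<bar>) = (\<Sum>i\<in>S. f \<bar>\<theta>hat $ i\<bar>) + rS"
      unfolding rS_def rho_on_def f_def by (simp add: sum.distrib)
    ultimately show ?thesis by simp
  qed
  define X where "X = w \<bullet> (Z *v u)"
  have yhat: "Z *v \<theta>star + w - Z *v \<theta>hat = w - Z *v u"
    by (simp add: u_def matrix_vector_mult_diff_distrib algebra_simps)
  have nsq: "(norm (w - Z *v u))\<^sup>2 = (norm w)\<^sup>2 - 2 * X + Q"
    unfolding Q_def X_def power2_norm_eq_inner
    by (simp add: inner_diff_left inner_diff_right inner_commute)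
  have A: "1 / (2 * N) * ((norm w)\<^sup>2 - 2 * X + Q) + rho_vec rho lam \<theta>hat
           \<le> 1 / (2 * N) * (norm w)\<^sup>2 + rho_vec rho lam \<theta>star"
    using argmin[rule_format, of \<theta>star] unfolding pen_obj_def yhat nsq N_def by simp
  have A2: "Q / (2 * N) - X / N + rSc \<le> rS"
  proof -
    have "1 / (2 * N) * ((norm w)\<^sup>2 - 2 * X + Q) = 1 / (2 * N) * (norm w)\<^sup>2 - X / N + Q / (2 * N)"
      using N by (simp add: field_simps)
    then show ?thesis using A rvhat rvstar by linarith
  qed
  have B: "X / N \<le> \<delta> * (Q / (2 * N) + rS + rSc)"
  proof -
    have "1 / N * \<bar>X\<bar> \<le> \<delta> * (1 / (2 * N) * Q + rho_vec rho lam u)"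
      using noise[rule_format, of u] unfolding X_def Q_def N_def by simp
    moreover have "X / N \<le> 1 / N * \<bar>X\<bar>" using N by (simp add: divide_right_mono)
    ultimately show ?thesis using rvu by (simp add: algebra_simps)
  qed
  have C: "(1 - \<delta>) * (Q / (2 * N) + rSc) \<le> (1 + \<delta>) * rS"
  proof -
    have e1g: "\<And>q. (1 - \<delta>) * (q + rSc) = q + rSc - \<delta> * q - \<delta> * rSc"
      by (simp add: algebra_simps)
    have e2g: "\<And>q. \<delta> * (q + rS + rSc) = \<delta> * q + \<delta> * rS + \<delta> * rSc"
      by (simp add: algebra_simps)
    note e1 = e1g[of "Q / (2 * N)"] and e2 = e2g[of "Q / (2 * N)"]
    have e3: "(1 + \<delta>) * rS = rS + \<delta> * rS" by (simp add: distrib_right)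
    show ?thesis unfolding e1 e3 using A2 B e2 by linarith
  qed
  have key: "Q / (2 * N) + rSc \<le> \<xi> * rS"
    unfolding \<xi>_def using C \<delta> by (simp add: field_simps)
  define Asq where "Asq = (\<Sum>i\<in>S. (u $ i)\<^sup>2)"
  define Bsq where "Bsq = (\<Sum>i\<in>-S. (u $ i)\<^sup>2)"
  have r2: "r\<^sup>2 = Asq + Bsq" unfolding r_def Asq_def Bsq_def norm_sq_vec by (rule sum_split_UNIV)
  have Asq0: "Asq \<ge> 0" and Bsq0: "Bsq \<ge> 0" unfolding Asq_def Bsq_def by (auto intro: sum_nonneg)
  have r0: "r \<ge> 0" unfolding r_def by simp
  have sqA: "sqrt Asq \<le> r"
  proof -
    have "sqrt Asq \<le> sqrt (r\<^sup>2)" using r2 Bsq0 by (intro real_sqrt_le_mono) linarith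
    then show ?thesis using r0 by simp
  qed
  have l1S: "(\<Sum>i\<in>S. \<bar>u $ i\<bar>) \<le> sqrt s * sqrt Asq"
    unfolding s_card Asq_def by (rule l1_le_sqrt)
  have s0: "s \<ge> 0" unfolding s_def by simp
  have rS_le: "rS \<le> D * sqrt s * r"
  proof -
    have "rS \<le> (\<Sum>i\<in>S. D * \<bar>u $ i\<bar>)"
      unfolding rS_def rho_on_def f_def[symmetric] by (rule sum_mono) (rule flin, simp)
    also have "\<dots> = D * (\<Sum>i\<in>S. \<bar>u $ i\<bar>)" by (simp add: sum_distrib_left)
    also have "\<dots> \<le> D * (sqrt s * r)"
    proof -
      have "sqrt s * sqrt Asq \<le> sqrt s * r" using sqA s0 by (simp add: mult_left_mono)
      then show ?thesis using l1S Dpos by (intro mult_left_mono) auto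
    qed
    finally show ?thesis by (simp add: mult.assoc)
  qed
  have Q0: "Q \<ge> 0" unfolding Q_def by simp
  have rSc_le: "rSc \<le> \<xi> * rS" proof -
    have "Q / (2 * N) \<ge> 0" using Q0 N by simp
    then show ?thesis using key by linarith
  qed
  have cone: "u \<in> rho_cone rho lam S \<xi>"
    using rSc_le unfolding rho_cone_def rSc_def rS_def by simp
  have Gle: "G \<le> ereal (Q / (N * r\<^sup>2))" if "u \<noteq> 0"
    unfolding G_def gamma2_def Q_def N_def r_def
    by (rule Inf_lower) (use cone that in blast)
  have l2main: "r \<le> 2 * \<xi> * D * sqrt s / g" if u0: "u \<noteq> 0" and Gg: "G = ereal g" and g: "g > 0" for g
  proof -
    have rpos: "r > 0" using u0 unfolding r_def by simp
    have "g \<le> Q / (N * r\<^sup>2)" using Gle[OF u0] Gg by simp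
    then have "g * r\<^sup>2 \<le> Q / N" using rpos N by (simp add: field_simps)
    moreover have "Q / (2 * N) \<le> \<xi> * (D * sqrt s * r)"
    proof -
      have "rSc \<ge> 0" unfolding rSc_def rho_on_def f_def[symmetric] by (rule sum_nonneg) (simp add: fnn)
      then have "Q / (2 * N) \<le> \<xi> * rS" using key by linarith
      also have "\<dots> \<le> \<xi> * (D * sqrt s * r)" using rS_le \<xi>pos by (simp add: mult_left_mono)
      finally show ?thesis .
    qed
    moreover have "Q / (2 * N) = (Q / N) / 2" by simp
    ultimately have "g * r\<^sup>2 \<le> 2 * \<xi> * D * sqrt s * r" by linarith
    then have "g * r * r \<le> (2 * \<xi> * D * sqrt s) * r" by (simp add: power2_eq_square mult.assoc)
    then have "g * r \<le> 2 * \<xi> * D * sqrt s" using rpos by simp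
    then show ?thesis using g by (simp add: field_simps)
  qed
  have l1main: "l1norm u \<le> (1 + \<xi>) * sqrt s * r" if u0: "u \<noteq> 0" and sp: "sqrt s > 0"
  proof -
    have rpos: "r > 0" using u0 unfolding r_def by simp
    have spos: "s > 0" using sp s0 by simp
    have ss: "sqrt s * sqrt s = s" using s0 by simp
    define T where "T = r / sqrt s"
    have T: "T > 0" unfolding T_def using rpos sp by simp
    have fT: "f T > 0" using fpos T by simp
    have Sne: "S \<noteq> {}" using spos s_card by auto
    have "rS \<le> real (card S) * f ((\<Sum>i\<in>S. \<bar>u $ i\<bar>) / real (card S))"
      unfolding rS_def rho_on_def f_def[symmetric] by (rule conc_jensen[OF conc _ Sne]) auto
    also have "\<dots> \<le> s * f T"
    proof -
      have "(\<Sum>i\<in>S. \<bar>u $ i\<bar>) / s \<le> sqrt s * sqrt Asq / s" using l1S spos by (simp add: divide_right_mono)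
      also have "\<dots> = sqrt s * sqrt Asq / (sqrt s * sqrt s)" by (simp only: ss)
      also have "\<dots> = sqrt Asq / sqrt s" by (rule mult_divide_mult_cancel_left) (use sp in simp)
      also have "\<dots> \<le> T" unfolding T_def using sqA sp by (simp add: divide_right_mono)
      finally have "(\<Sum>i\<in>S. \<bar>u $ i\<bar>) / s \<le> T" .
      then have "f ((\<Sum>i\<in>S. \<bar>u $ i\<bar>) / s) \<le> f T" by (intro fmono) (auto intro: sum_nonneg divide_nonneg_nonneg s0)
      then show ?thesis using s_card spos by (simp add: mult_left_mono)
    qed
    finally have rS_T: "rS \<le> s * f T" .
    have Sc: "(\<Sum>i\<in>-S. \<bar>u $ i\<bar>) \<le> T * rSc / f T + Bsq / (2 * T)"
    proof -
      have "(\<Sum>i\<in>-S. \<bar>u $ i\<bar>) \<le> (\<Sum>i\<in>-S. T * f \<bar>u $ i\<bar> / f T + (u $ i)\<^sup>2 / (2 * T))"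
      proof (rule sum_mono)
        fix i
        show "\<bar>u $ i\<bar> \<le> T * f \<bar>u $ i\<bar> / f T + (u $ i)\<^sup>2 / (2 * T)"
          using coord_bound[OF conc mono f0 T fT, of "\<bar>u $ i\<bar>"] by simp
      qed
      also have "\<dots> = T * rSc / f T + Bsq / (2 * T)"
        unfolding rSc_def rho_on_def f_def[symmetric] Bsq_def
        by (simp add: sum.distrib sum_divide_distrib[symmetric] sum_distrib_left)
      finally show ?thesis .
    qed
    have "T * rSc / f T \<le> T * (\<xi> * (s * f T)) / f T"
    proof -
      have "rSc \<le> \<xi> * (s * f T)" proof -
        have "\<xi> * rS \<le> \<xi> * (s * f T)" using rS_T \<xi>pos by (simp add: mult_left_mono)
        then show ?thesis using rSc_le by linarith
      qed
      then have "T * rSc \<le> T * (\<xi> * (s * f T))" using T by (intro mult_left_mono) auto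
      then show ?thesis using fT by (intro divide_right_mono) auto
    qed
    also have "\<dots> = T * \<xi> * s" using fT by simp
    also have "\<dots> = r / sqrt s * \<xi> * (sqrt s * sqrt s)" unfolding T_def ss ..
    also have "\<dots> = \<xi> * sqrt s * r"
    proof -
      have "r / sqrt s * \<xi> * (sqrt s * sqrt s) = (r / sqrt s * sqrt s) * \<xi> * sqrt s" by (simp only: ac_simps)
      also have "r / sqrt s * sqrt s = r" using sp by simp
      finally show ?thesis by (simp only: ac_simps)
    qed
    finally have Sc2: "T * rSc / f T \<le> \<xi> * sqrt s * r" .
    have BT: "Bsq / (2 * T) = sqrt s * Bsq / (2 * r)" unfolding T_def using sp rpos by (simp add: field_simps)
    define a where "a = sqrt Asq"
    have a0: "a \<ge> 0" unfolding a_def using Asq0 by simp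
    have aA: "a\<^sup>2 = Asq" unfolding a_def using Asq0 by simp
    have "a + Bsq / (2 * r) \<le> r"
    proof -
      have "2 * a * r + Bsq \<le> 2 * r * r"
      proof -
        have "(r - a)\<^sup>2 \<ge> 0" by simp
        moreover have "(r - a)\<^sup>2 = r * r - 2 * a * r + a\<^sup>2" by (simp add: power2_eq_square algebra_simps)
        moreover have "r\<^sup>2 = r * r" by (simp add: power2_eq_square)
        ultimately show ?thesis using r2 aA by linarith
      qed
      then show ?thesis using rpos by (simp add: field_simps)
    qed
    then have last: "sqrt s * a + sqrt s * Bsq / (2 * r) \<le> sqrt s * r"
    proof -
      have "sqrt s * a + sqrt s * Bsq / (2 * r) = sqrt s * (a + Bsq / (2 * r))" by (simp add: distrib_left)
      also have "\<dots> \<le> sqrt s * r" using sp \<open>a + Bsq / (2 * r) \<le> r\<close> by (simp add: mult_left_mono)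
      finally show ?thesis .
    qed
    have "l1norm u = (\<Sum>i\<in>S. \<bar>u $ i\<bar>) + (\<Sum>i\<in>-S. \<bar>u $ i\<bar>)"
      unfolding l1norm_def by (rule sum_split_UNIV)
    also have "\<dots> \<le> sqrt s * a + (\<xi> * sqrt s * r + sqrt s * Bsq / (2 * r))"
      using l1S Sc Sc2 BT unfolding a_def by linarith
    also have "\<dots> \<le> (1 + \<xi>) * sqrt s * r" using last by (simp add: algebra_simps)
    finally show ?thesis .
  qed
  have c1: "0 \<le> 2 * \<xi> * D * sqrt s" using \<xi>pos Dpos s0 by simp
  have c2: "0 \<le> 2 * \<xi> * (1 + \<xi>) * D * s" using \<xi>pos Dpos s0 by simp
  have main: "ereal r \<le> ereal (2 * \<xi> * D * sqrt s) / G \<and>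
              ereal (l1norm u) \<le> ereal (2 * \<xi> * (1 + \<xi>) * D * s) / G"
  proof (cases G)
    case PInf
    have "u = 0"
    proof (rule ccontr)
      assume "u \<noteq> 0" then show False using Gle PInf by simp
    qed
    then show ?thesis using PInf by (simp add: r_def l1norm_def)
  next
    case MInf
    then show ?thesis using gam unfolding G_def S_def \<xi>_def by simp
  next
    case (real g)
    have g: "g > 0" using gam real unfolding G_def S_def \<xi>_def by simp
    show ?thesis
    proof (cases "u = 0")
      case True
      then show ?thesis using real g c1 c2 by (simp add: r_def l1norm_def)
    next
      case False
      have b1: "r \<le> 2 * \<xi> * D * sqrt s / g" using l2main[OF False real g] .
      have sp: "sqrt s > 0"
      proof (rule ccontr)
        assume "\<not> sqrt s > 0" then have "sqrt s = 0" using s0 by simp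
        moreover have "r > 0" using False unfolding r_def by simp
        ultimately show False using b1 by simp
      qed
      have "l1norm u \<le> (1 + \<xi>) * sqrt s * (2 * \<xi> * D * sqrt s / g)"
      proof -
        have "(1 + \<xi>) * sqrt s * r \<le> (1 + \<xi>) * sqrt s * (2 * \<xi> * D * sqrt s / g)"
          using b1 \<xi>pos sp by (intro mult_left_mono) auto
        then show ?thesis using l1main[OF False sp] by linarith
      qed
      also have "\<dots> = 2 * \<xi> * (1 + \<xi>) * D * s / g"
      proof -
        have sq: "\<And>x. sqrt s * (sqrt s * x) = s * x" using s0 by (simp add: mult.assoc[symmetric])
        show ?thesis by (simp add: field_simps sq)
      qed
      finally have b2: "l1norm u \<le> 2 * \<xi> * (1 + \<xi>) * D * s / g" .
      show ?thesis using real g b1 b2 by simp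
    qed
  qed
  then show ?thesis unfolding r_def u_def G_def S_def \<xi>_def D_def s_def .
qed

end
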